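(* Let $Y\subset\mathbb{R}^2$ be a finite point set in general position. Let $w_1$ and $w_2$ be two points of $\mathrm{Vor}_Q(Y)$, each a Voronoi edge bend or a Voronoi vertex, that are adjacent along a Voronoi edge of $\mathrm{Vor}_Q(Y)$ (i.e., consecutive bends/vertices on that edge). Then for every point $x$ on the segment $w_1w_2$, we have $Q^*_x\subseteq Q^*_{w_1}\cup Q^*_{w_2}$. The same conclusion holds if $w_1$ and $w_2$ are the two Voronoi vertices that are the endpoints of a Voronoi edge $e$ of $\mathrm{Vor}_Q(Y)$ and $x$ is any point on $e$.
   Context: Let $Q\subset\mathbb{R}^2$ be a convex polygon with a constant number of vertices containing the origin in its interior. For $x,y\in\mathbb{R}^2$, $d_Q(x,y)=\min\{\lambda\ge 0: y\in\lambda Q+x\}$. Let $Q^*=\{-x:x\in Q\}$, so $d_{Q^*}(x,y)=d_Q(y,x)$. For a finite set $Y$ and $p\in Y$, the Voronoi cell is $V_p(Y)=\{x\in\mathbb{R}^2: d_Q(p,x)\le d_Q(q,x)\ \forall q\in Y\}$, and $\mathrm{Vor}_Q(Y)$ is the subdivision of the plane into these cells. Each Voronoi edge (common boundary of two cells) is a polygonal curve; its interior vertices are called Voronoi edge bends. For $x\in\mathbb{R}^2$, $Q^*_x$ denotes the largest homothetic copy $\lambda Q^*+x$ ($\lambda\ge 0$) of $Q^*$ centered at $x$ such that $\mathrm{int}(Q^*_x)\cap Y=\emptyset$. General position means: no two sides of $Q$ are parallel; no line through two points of $Y$ is parallel to a side of $Q$; no four points of $Y$ lie on the boundary of a homothetic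 copy of $Q^*$. *)

theory Defs
  imports "HOL-Analysis.Analysis"
begin

definition cross2 :: "real^2 \<Rightarrow> real^2 \<Rightarrow> real" where
  "cross2 u v = u$1 * v$2 - u$2 * v$1"

definition parallel_dir :: "real^2 \<Rightarrow> real^2 \<Rightarrow> real^2 \<Rightarrow> real^2 \<Rightarrow> bool" where
  "parallel_dir a b c d \<longleftrightarrow> cross2 (b - a) (d - c) = 0"

definition homothet :: "(real^2) set \<Rightarrow> real \<Rightarrow> real^2 \<Rightarrow> (real^2) set" where
  "homothet S lam c = (\<lambda>s. c + lam *\<^sub>R s) ` S"

definition reflect :: "(real^2) set \<Rightarrow> (real^2) set" where
  "reflect Q = uminus ` Q"

definition dQ :: "(real^2) set \<Rightarrow> real^2 \<Rightarrow> real^2 \<Rightarrow> real" where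
  "dQ Q x y = Inf {lam. 0 \<le> lam \<and> y \<in> homothet Q lam x}"

definition vcell :: "(real^2) set \<Rightarrow> (real^2) set \<Rightarrow> real^2 \<Rightarrow> (real^2) set" where
  "vcell Q Y p = {x. \<forall>q\<in>Y. dQ Q p x \<le> dQ Q q x}"

definition voronoi_edge :: "(real^2) set \<Rightarrow> (real^2) set \<Rightarrow> (real^2) set \<Rightarrow> bool" where
  "voronoi_edge Q Y e \<longleftrightarrow>
     (\<exists>p\<in>Y. \<exists>q\<in>Y. p \<noteq> q \<and> e = vcell Q Y p \<inter> vcell Q Y q) \<and>
     (\<exists>a\<in>e. \<exists>b\<in>e. a \<noteq> b)"

definition voronoi_vertex :: "(real^2) set \<Rightarrow> (real^2) set \<Rightarrow> real^2 \<Rightarrow> bool" where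
  "voronoi_vertex Q Y x \<longleftrightarrow> card {p\<in>Y. x \<in> vcell Q Y p} \<ge> 3"

text \<open>Bend of a polygonal curve e: a point of e near which e is not contained
  in a line (i.e. an interior vertex of the polygonal curve).\<close>
definition edge_bend :: "(real^2) set \<Rightarrow> real^2 \<Rightarrow> bool" where
  "edge_bend e w \<longleftrightarrow> w \<in> e \<and> (\<forall>r>0. \<not> collinear (e \<inter> ball w r))"

definition curve_endpoint :: "(real^2) set \<Rightarrow> real^2 \<Rightarrow> bool" where
  "curve_endpoint e w \<longleftrightarrow> w \<in> e \<and> connected (e - {w})"

definition special_pts :: "(real^2) set \<Rightarrow> (real^2) set \<Rightarrow> (real^2) set \<Rightarrow> (real^2) set" where
  "special_pts Q Y e = {w\<in>e. edge_bend e w \<or> voronoi_vertex Q Y w}"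

definition adjacent_on_edge ::
  "(real^2) set \<Rightarrow> (real^2) set \<Rightarrow> (real^2) set \<Rightarrow> real^2 \<Rightarrow> real^2 \<Rightarrow> bool" where
  "adjacent_on_edge Q Y e w1 w2 \<longleftrightarrow>
     w1 \<in> special_pts Q Y e \<and> w2 \<in> special_pts Q Y e \<and> w1 \<noteq> w2 \<and>
     closed_segment w1 w2 \<subseteq> e \<and> open_segment w1 w2 \<inter> special_pts Q Y e = {}"

definition Qstar_at :: "(real^2) set \<Rightarrow> (real^2) set \<Rightarrow> real^2 \<Rightarrow> (real^2) set" where
  "Qstar_at Q Y x = homothet (reflect Q)
     (Sup {lam. 0 \<le> lam \<and> interior (homothet (reflect Q) lam x) \<inter> Y = {}}) x"

definition side_of :: "(real^2) set \<Rightarrow> (real^2) set \<Rightarrow> bool" where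
  "side_of F Q \<longleftrightarrow> F face_of Q \<and> aff_dim F = 1"

definition general_position :: "(real^2) set \<Rightarrow> (real^2) set \<Rightarrow> bool" where
  "general_position Q Y \<longleftrightarrow>
     (\<forall>F1 F2. side_of F1 Q \<longrightarrow> side_of F2 Q \<longrightarrow> F1 \<noteq> F2 \<longrightarrow>
        (\<forall>a\<in>F1. \<forall>b\<in>F1. \<forall>c\<in>F2. \<forall>d\<in>F2. a \<noteq> b \<longrightarrow> c \<noteq> d \<longrightarrow> \<not> parallel_dir a b c d)) \<and>
     (\<forall>y1\<in>Y. \<forall>y2\<in>Y. y1 \<noteq> y2 \<longrightarrow> (\<forall>F. side_of F Q \<longrightarrow>
        (\<forall>a\<in>F. \<forall>b\<in>F. a \<noteq> b \<longrightarrow> \<not> parallel_dir y1 y2 a b))) \<and>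
     (\<forall>lam>0. \<forall>c. card (Y \<inter> frontier (homothet (reflect Q) lam c)) \<le> 3)"

end

theory Submission
  imports Defs
begin

lemma sc1:
  fixes D1 D2 \<kappa> \<tau> a1 :: real
  assumes "D1 \<noteq> 0" "D2 \<noteq> 0" "D1 = 1 - \<tau>" "D2 = 1 - \<kappa> * \<tau>"
  shows "((1 - \<tau> - \<kappa> * \<tau>) / D1) * (a1 / D2) * \<kappa> + (1 - (1 - \<tau> - \<kappa> * \<tau>) / D1) * (a1 / D2) = \<kappa> * (a1 / D1)"
proof -
  have e1: "1 - \<tau> - \<kappa> * \<tau> = D1 - \<kappa> * \<tau>" using assms by simp
  have e2: "D1 - \<kappa> * \<tau> + \<tau> = D2" using assms by simp
  have "((D1 - \<kappa> * \<tau>) / D1) * (a1 / D2) * \<kappa> + (1 - (D1 - \<kappa> * \<tau>) / D1) * (a1 / D2)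
      = (a1 * \<kappa> / (D1 * D2)) * (D1 - \<kappa> * \<tau> + \<tau>)"
    using assms(1,2) by (simp add: field_simps)
  also have "\<dots> = \<kappa> * (a1 / D1)" unfolding e2 using assms(1,2) by (simp add: field_simps)
  finally show ?thesis unfolding e1 .
qed

lemma sc2:
  fixes D1 D2 \<kappa> \<tau> a1 :: real
  assumes "D1 \<noteq> 0" "D2 \<noteq> 0" "\<tau> \<noteq> 0" "D1 = 1 - \<tau>" "D2 = 1 - \<kappa> * \<tau>"
  shows "((\<kappa> * \<tau> + \<tau> - 1) / \<tau>) * (a1 / D1) + (1 - (\<kappa> * \<tau> + \<tau> - 1) / \<tau>) * (a1 / D2) = \<kappa> * (a1 / D1)"
proof -
  have e1: "(\<kappa> * \<tau> + \<tau> - 1) / \<tau> = \<kappa> - D1 / \<tau>" using assms by (simp add: field_simps)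
  have e2: "1 - (\<kappa> - D1 / \<tau>) = D2 / \<tau>" using assms by (simp add: field_simps)
  show ?thesis unfolding e1 e2 using assms(1,2,3) by (simp add: field_simps)
qed


locale vs =
  fixes A :: "(real^2) set" and Q :: "(real^2) set"
  assumes finA: "finite A" and Ane: "A \<noteq> {}"
  and Qdef: "Q = {v. \<forall>a\<in>A. a \<bullet> v \<le> 1}"
  and bndQ: "bounded Q"
begin

definition G :: "real^2 \<Rightarrow> real" where "G v = Max ((\<lambda>a. a \<bullet> v) ` A)"

lemma G_le: "G v \<le> t \<longleftrightarrow> (\<forall>a\<in>A. a \<bullet> v \<le> t)"
  unfolding G_def using finA Ane by (simp add: Max_le_iff)

lemma G_ge: "a \<in> A \<Longrightarrow> a \<bullet> v \<le> G v"
  using G_le by blast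

lemma G_attain: "\<exists>a\<in>A. a \<bullet> v = G v"
proof -
  have "G v \<in> (\<lambda>a. a \<bullet> v) ` A" unfolding G_def using finA Ane by (intro Max_in) auto
  then show ?thesis by auto
qed

lemma G_less: "G v < t \<longleftrightarrow> (\<forall>a\<in>A. a \<bullet> v < t)"
  by (metis G_attain G_ge le_less_trans)

lemma G_scale: assumes "c > 0" shows "G (c *\<^sub>R v) = c * G v"
proof -
  obtain a where a: "a \<in> A" "a \<bullet> v = G v" using G_attain by blast
  have "G (c *\<^sub>R v) \<le> c * G v"
    unfolding G_le using G_ge assms by (simp add: mult_left_mono)
  moreover have "c * G v \<le> G (c *\<^sub>R v)"
    using G_ge[OF a(1), of "c *\<^sub>R v"] a by simp
  ultimately show ?thesis by simp
qed

lemma inQ: "v \<in> Q \<longleftrightarrow> G v \<le> 1"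
  using Qdef G_le by auto

lemma G_pos: assumes "v \<noteq> 0" shows "G v > 0"
proof (rule ccontr)
  assume "\<not> G v > 0"
  then have h: "\<forall>a\<in>A. a \<bullet> v \<le> 0" using G_ge by (meson not_less order.trans)
  obtain B where B: "\<forall>y\<in>Q. norm y \<le> B" using bndQ bounded_iff by blast
  define t where "t = (\<bar>B\<bar> + 1) / norm v"
  have tpos: "t > 0" using assms by (simp add: t_def)
  have "t *\<^sub>R v \<in> Q" unfolding Qdef using h tpos
    by (auto simp: mult_nonneg_nonpos intro: order.trans[of _ 0])
  then have "norm (t *\<^sub>R v) \<le> B" using B by blast
  moreover have "norm (t *\<^sub>R v) = \<bar>B\<bar> + 1" using assms tpos by (simp add: t_def)
  ultimately show False by linarith
qed

lemma G_zero: "G 0 = 0"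
  using G_attain[of 0] by auto

lemma G_nonneg: "G v \<ge> 0"
  using G_pos G_zero by (cases "v = 0") (auto intro: less_imp_le)

lemma G_convex: "convex_on UNIV G"
  unfolding convex_on_def
proof (intro conjI convex_UNIV ballI allI impI)
  fix x y :: "real^2" and u v :: real
  assume "0 \<le> u" "0 \<le> v" "u + v = 1"
  show "G (u *\<^sub>R x + v *\<^sub>R y) \<le> u * G x + v * G y"
    unfolding G_le
  proof
    fix a assume a: "a \<in> A"
    have "a \<bullet> (u *\<^sub>R x + v *\<^sub>R y) = u * (a \<bullet> x) + v * (a \<bullet> y)" by (simp add: inner_add_right)
    also have "\<dots> \<le> u * G x + v * G y"
      using G_ge[OF a] \<open>0 \<le> u\<close> \<open>0 \<le> v\<close> by (intro add_mono mult_left_mono) auto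
    finally show "a \<bullet> (u *\<^sub>R x + v *\<^sub>R y) \<le> u * G x + v * G y" .
  qed
qed

lemma G_cont: "continuous_on UNIV G"
  using convex_on_continuous[OF open_UNIV G_convex] .

lemma zero_Q: "0 \<in> Q" using inQ G_zero by simp

lemma hom_mem: assumes "lam > 0"
  shows "x \<in> homothet Q lam y \<longleftrightarrow> G (x - y) \<le> lam"
proof
  assume "x \<in> homothet Q lam y"
  then obtain s where s: "s \<in> Q" "x = y + lam *\<^sub>R s" by (auto simp: homothet_def)
  then show "G (x - y) \<le> lam" using G_scale[OF assms] inQ assms
    by (simp add: mult_le_cancel_left1)
next
  assume h: "G (x - y) \<le> lam"
  define s where "s = (1/lam) *\<^sub>R (x - y)"
  have "G s = G (x - y) / lam" using G_scale[of "1/lam"] assms by (simp add: s_def)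
  then have "s \<in> Q" using h assms inQ by simp
  moreover have "x = y + lam *\<^sub>R s" using assms by (simp add: s_def)
  ultimately show "x \<in> homothet Q lam y" by (auto simp: homothet_def)
qed

lemma hom0: "homothet S 0 y = (if S = {} then {} else {y})"
  by (auto simp: homothet_def)

lemma rhom_mem: assumes "lam > 0"
  shows "z \<in> homothet (reflect Q) lam x \<longleftrightarrow> G (x - z) \<le> lam"
proof
  assume "z \<in> homothet (reflect Q) lam x"
  then obtain s where s: "s \<in> Q" "z = x + lam *\<^sub>R (- s)" by (auto simp: homothet_def reflect_def)
  then have "x - z = lam *\<^sub>R s" by simp
  then show "G (x - z) \<le> lam" using G_scale[OF assms] inQ s(1) assms
    by (simp add: mult_le_cancel_left1)
next
  assume h: "G (x - z) \<le> lam"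
  define s where "s = (1/lam) *\<^sub>R (x - z)"
  have "G s = G (x - z) / lam" using G_scale[of "1/lam"] assms by (simp add: s_def)
  then have "s \<in> Q" using h assms inQ by simp
  moreover have "z = x + lam *\<^sub>R (- s)" using assms by (simp add: s_def)
  ultimately have "- s \<in> reflect Q" "z = x + lam *\<^sub>R (- s)" by (auto simp: reflect_def)
  then show "z \<in> homothet (reflect Q) lam x" unfolding homothet_def by blast
qed

lemma dQ_eq: "dQ Q y x = G (x - y)"
proof -
  have "{lam. 0 \<le> lam \<and> x \<in> homothet Q lam y} = {G (x - y)..}"
  proof (intro set_eqI iffI)
    fix lam assume "lam \<in> {lam. 0 \<le> lam \<and> x \<in> homothet Q lam y}"
    then have l: "0 \<le> lam" "x \<in> homothet Q lam y" by auto
    show "lam \<in> {G (x - y)..}"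
    proof (cases "lam = 0")
      case True
      then have "x = y" using l zero_Q by (auto simp: hom0 split: if_splits)
      then show ?thesis using True G_zero by simp
    next
      case False
      then show ?thesis using l hom_mem by simp
    qed
  next
    fix lam assume "lam \<in> {G (x - y)..}"
    then have l: "G (x - y) \<le> lam" by simp
    show "lam \<in> {lam. 0 \<le> lam \<and> x \<in> homothet Q lam y}"
    proof (cases "lam = 0")
      case True
      then have "x = y" using l G_pos G_nonneg by (metis eq_iff_diff_eq_0 not_le)
      then show ?thesis using True zero_Q by (auto simp: hom0)
    next
      case False
      then have "lam > 0" using l G_nonneg[of "x - y"] by simp
      then show ?thesis using l hom_mem by simp
    qed
  qed
  then show ?thesis unfolding dQ_def by simp
qed

lemma Gx_cont: "continuous_on UNIV (\<lambda>z. G (x - z))"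
  using G_cont by (intro continuous_on_compose2[OF G_cont]) (auto intro!: continuous_intros)

lemma interior_rhom: assumes "lam > 0"
  shows "interior (homothet (reflect Q) lam x) = {z. G (x - z) < lam}"
proof
  have "open {z. G (x - z) < lam}"
    using Gx_cont by (intro open_Collect_less) (auto intro!: continuous_intros)
  moreover have "{z. G (x - z) < lam} \<subseteq> homothet (reflect Q) lam x"
    using rhom_mem[OF assms] by auto
  ultimately show "{z. G (x - z) < lam} \<subseteq> interior (homothet (reflect Q) lam x)"
    by (simp add: interior_maximal)
next
  show "interior (homothet (reflect Q) lam x) \<subseteq> {z. G (x - z) < lam}"
  proof
    fix z assume z: "z \<in> interior (homothet (reflect Q) lam x)"
    then obtain \<epsilon> where ep: "\<epsilon> > 0" "ball z \<epsilon> \<subseteq> homothet (reflect Q) lam x"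
      by (meson mem_interior)
    have zin: "G (x - z) \<le> lam" using z interior_subset rhom_mem[OF assms] by blast
    show "z \<in> {z. G (x - z) < lam}"
    proof (rule ccontr)
      assume "z \<notin> {z. G (x - z) < lam}"
      then have eq: "G (x - z) = lam" using zin by simp
      obtain a where a: "a \<in> A" "a \<bullet> (x - z) = lam" using G_attain eq by metis
      have an: "a \<noteq> 0" using a assms by auto
      define t where "t = \<epsilon> / (2 * norm a)"
      have tp: "t > 0" using an ep by (simp add: t_def)
      define z' where "z' = z - t *\<^sub>R a"
      have "dist z z' = \<epsilon> / 2" using an tp ep(1) by (simp add: z'_def dist_norm t_def)
      then have "z' \<in> homothet (reflect Q) lam x" using ep by auto
      then have "G (x - z') \<le> lam" using rhom_mem[OF assms] by blast
      moreover have "a \<bullet> (x - z') = lam + t * (a \<bullet> a)"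
        using a by (simp add: z'_def inner_diff_right algebra_simps)
      moreover have "a \<bullet> a > 0" using an by simp
      ultimately show False using G_ge[OF a(1), of "x - z'"] tp
        by (smt (verit) mult_pos_pos)
    qed
  qed
qed

lemma Qstar_eq:
  assumes "p \<in> Y" "\<forall>y\<in>Y. G (x - p) \<le> G (x - y)" "G (x - p) > 0"
  shows "Qstar_at Q Y x = {z. G (x - z) \<le> G (x - p)}"
proof -
  let ?r = "G (x - p)"
  have S: "{lam. 0 \<le> lam \<and> interior (homothet (reflect Q) lam x) \<inter> Y = {}} = {0..?r}"
  proof (intro set_eqI iffI)
    fix lam assume "lam \<in> {lam. 0 \<le> lam \<and> interior (homothet (reflect Q) lam x) \<inter> Y = {}}"
    then have l: "0 \<le> lam" "interior (homothet (reflect Q) lam x) \<inter> Y = {}" by auto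
    show "lam \<in> {0..?r}"
    proof (rule ccontr)
      assume "lam \<notin> {0..?r}"
      then have "lam > ?r" using l by auto
      then have "p \<in> interior (homothet (reflect Q) lam x)" using interior_rhom assms by auto
      then show False using l assms by blast
    qed
  next
    fix lam assume "lam \<in> {0..?r}"
    then have l: "0 \<le> lam" "lam \<le> ?r" by auto
    show "lam \<in> {lam. 0 \<le> lam \<and> interior (homothet (reflect Q) lam x) \<inter> Y = {}}"
    proof (cases "lam = 0")
      case True
      then show ?thesis by (simp add: hom0)
    next
      case False
      then have lp: "lam > 0" using l by simp
      have "interior (homothet (reflect Q) lam x) \<inter> Y = {}"
        using interior_rhom[OF lp] assms(2) l by force
      then show ?thesis using l by simp
    qed
  qed
  have "Qstar_at Q Y x = homothet (reflect Q) ?r x" unfolding Qstar_at_def S using assms(3) by simp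
  then show ?thesis using rhom_mem[OF assms(3)] by auto
qed

end


lemma cross2_add: "cross2 d (a + b) = cross2 d a + cross2 d b"
  by (simp add: cross2_def algebra_simps)
lemma cross2_diff: "cross2 d (a - b) = cross2 d a - cross2 d b"
  by (simp add: cross2_def algebra_simps)
lemma cross2_scale: "cross2 d (t *\<^sub>R a) = t * cross2 d a"
  by (simp add: cross2_def algebra_simps)
lemma cross2_self: "cross2 d d = 0"
  by (simp add: cross2_def algebra_simps)
lemma cross2_minus: "cross2 d (- a) = - cross2 d a"
  by (simp add: cross2_def algebra_simps)

lemma cross2_zero_par:
  fixes d w :: "real^2"
  assumes "d \<noteq> 0" "cross2 d w = 0"
  shows "\<exists>s. w = s *\<^sub>R d"
proof (cases "d$1 = 0")
  case True
  then have d2: "d$2 \<noteq> 0" using assms(1) by (metis vec_eq_iff exhaust_2 zero_index)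
  have "w$1 = 0" using assms(2) True d2 by (simp add: cross2_def)
  then have "w = (w$2 / d$2) *\<^sub>R d" using True d2 by (simp add: vec_eq_iff forall_2)
  then show ?thesis by blast
next
  case False
  have "w$2 * d$1 = w$1 * d$2" using assms(2) by (simp add: cross2_def algebra_simps)
  then have "w = (w$1 / d$1) *\<^sub>R d" using False
    by (simp add: vec_eq_iff forall_2 field_simps)
  then show ?thesis by blast
qed

lemma seg_coef: "z \<in> closed_segment p q \<Longrightarrow> \<exists>u. 0 \<le> u \<and> u \<le> 1 \<and> z = p + u *\<^sub>R (q - p)"
  unfolding closed_segment_def by (auto simp: algebra_simps)

lemma seg_coef2: "0 \<le> u \<Longrightarrow> u \<le> 1 \<Longrightarrow> p + u *\<^sub>R (q - p) \<in> closed_segment p q"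
  unfolding closed_segment_def by (rule CollectI, rule exI[of _ u]) (auto simp: algebra_simps)

lemma LX:
  fixes C :: "(real^2) set" and p q e w :: "real^2" and c \<kappa> :: real
  assumes cvx: "convex C" and pC: "p \<in> C" and qC: "q \<in> C" and pq: "p \<noteq> q"
    and peC: "p + e \<in> C" and pkC: "p + \<kappa> *\<^sub>R (q - p) + e \<in> C" and kp: "\<kappa> > 0"
    and ce: "c * cross2 (q - p) e < 0"
    and chord: "\<forall>z\<in>C. cross2 (q - p) (z - p) = 0 \<longrightarrow> z \<in> closed_segment p q"
    and wC: "w \<in> C" and cw: "c * cross2 (q - p) (w - p) \<ge> 0"
  shows "p + \<kappa> *\<^sub>R (w - p) + e \<in> C"
proof -
  define d where "d = q - p"
  have dnz: "d \<noteq> 0" using pq by (simp add: d_def)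
  define t0 where "t0 = c * cross2 d (w - p)"
  define c0 where "c0 = - (c * cross2 d e)"
  have t0: "t0 \<ge> 0" using cw by (simp add: t0_def d_def)
  have c0: "c0 > 0" using ce by (simp add: c0_def d_def)
  define \<tau> where "\<tau> = t0 / (t0 + c0)"
  have tau0: "0 \<le> \<tau>" and tau1: "\<tau> < 1" using t0 c0 by (auto simp: \<tau>_def field_simps)
  have taueq: "(1 - \<tau>) * t0 = \<tau> * c0" using t0 c0 by (simp add: \<tau>_def field_simps)
  define m1 where "m1 = (1 - \<tau>) *\<^sub>R w + \<tau> *\<^sub>R (p + e)"
  have m1C: "m1 \<in> C" unfolding m1_def using cvx wC peC tau0 tau1 by (intro convexD) auto
  have m1p: "m1 - p = (1 - \<tau>) *\<^sub>R (w - p) + \<tau> *\<^sub>R e"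
    by (simp add: m1_def algebra_simps)
  have "cross2 d (m1 - p) = (1 - \<tau>) * cross2 d (w - p) + \<tau> * cross2 d e"
    by (simp only: m1p cross2_add cross2_scale)
  then have "c * cross2 d (m1 - p) = c * ((1 - \<tau>) * cross2 d (w - p) + \<tau> * cross2 d e)"
    by simp
  also have "\<dots> = (1 - \<tau>) * t0 - \<tau> * c0"
    unfolding t0_def c0_def by (simp add: algebra_simps)
  finally have "c * cross2 d (m1 - p) = (1 - \<tau>) * t0 - \<tau> * c0" .
  then have "c * cross2 d (m1 - p) = 0" using taueq by simp
  moreover have "c \<noteq> 0" using ce by auto
  ultimately have "cross2 (q - p) (m1 - p) = 0" by (simp add: d_def)
  then obtain a1 where a1: "0 \<le> a1" "a1 \<le> 1" "m1 = p + a1 *\<^sub>R d"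
    using chord m1C seg_coef by (metis d_def)
  define m2 where "m2 = (1 - \<tau>) *\<^sub>R w + \<tau> *\<^sub>R (p + \<kappa> *\<^sub>R (q - p) + e)"
  have m2C: "m2 \<in> C" unfolding m2_def using cvx wC pkC tau0 tau1 by (intro convexD) auto
  have m2p: "m2 - p = (m1 - p) + (\<tau> * \<kappa>) *\<^sub>R d"
    by (simp add: m2_def m1_def d_def algebra_simps)
  then have m2p': "m2 - p = (a1 + \<tau> * \<kappa>) *\<^sub>R d" using a1 by (simp add: algebra_simps)
  have "cross2 (q - p) (m2 - p) = 0" unfolding m2p' by (simp add: cross2_scale cross2_self d_def)
  then obtain a2 where a2: "0 \<le> a2" "a2 \<le> 1" "m2 = p + a2 *\<^sub>R d"
    using chord m2C seg_coef by (metis d_def)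
  have "a2 *\<^sub>R d = (a1 + \<tau> * \<kappa>) *\<^sub>R d" using a2(3) m2p' by simp
  then have "a2 = a1 + \<tau> * \<kappa>" using dnz by (simp add: scaleR_cancel_right)
  then have a1k: "a1 + \<tau> * \<kappa> \<le> 1" using a2 by simp
  have W: "(1 - \<tau>) *\<^sub>R (w - p) = a1 *\<^sub>R d - \<tau> *\<^sub>R e" using m1p a1(3) by (simp add: algebra_simps)
  define wd where "wd = a1 / (1 - \<tau>)"
  define we where "we = - \<tau> / (1 - \<tau>)"
  have w_eq: "w = p + wd *\<^sub>R d + we *\<^sub>R e"
  proof -
    have "(1 / (1 - \<tau>)) *\<^sub>R ((1 - \<tau>) *\<^sub>R (w - p)) = w - p" using tau1 by simp
    then have "w - p = (1 / (1 - \<tau>)) *\<^sub>R (a1 *\<^sub>R d - \<tau> *\<^sub>R e)" using W by simp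
    also have "\<dots> = wd *\<^sub>R d + we *\<^sub>R e"
      by (simp add: wd_def we_def scaleR_diff_right divide_inverse mult.commute)
    finally show ?thesis by (simp add: algebra_simps)
  qed
  have T_eq: "p + \<kappa> *\<^sub>R (w - p) + e = p + (\<kappa> * wd) *\<^sub>R d + (\<kappa> * we + 1) *\<^sub>R e"
    unfolding w_eq by (simp add: algebra_simps)
  have kt: "\<kappa> * \<tau> \<ge> 0" using kp tau0 by simp
  define \<mu> where "\<mu> = a1 / (1 - \<kappa> * \<tau>)"
  have q_eq: "q = p + d" by (simp add: d_def)
  have t1nz: "1 - \<tau> \<noteq> 0" using tau1 by simp
  show ?thesis
  proof (cases "1 - \<tau> - \<kappa> * \<tau> \<ge> 0")
    case True
    have den: "1 - \<kappa> * \<tau> > 0" using True tau0 by (cases "\<tau> = 0") auto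
    have mu0: "0 \<le> \<mu>" and mu1: "\<mu> \<le> 1" using a1 a1k den by (auto simp: \<mu>_def field_simps)
    define B where "B = (1 - \<tau> - \<kappa> * \<tau>) / (1 - \<tau>)"
    have B0: "0 \<le> B" and B1: "B \<le> 1" using True tau1 tau0 kt by (auto simp: B_def field_simps)
    define y1 where "y1 = (1 - \<mu>) *\<^sub>R (p + e) + \<mu> *\<^sub>R (p + \<kappa> *\<^sub>R (q - p) + e)"
    define y2 where "y2 = (1 - \<mu>) *\<^sub>R p + \<mu> *\<^sub>R q"
    have y1C: "y1 \<in> C" unfolding y1_def using cvx peC pkC mu0 mu1 by (intro convexD) auto
    have y2C: "y2 \<in> C" unfolding y2_def using cvx pC qC mu0 mu1 by (intro convexD) auto
    have mem: "B *\<^sub>R y1 + (1 - B) *\<^sub>R y2 \<in> C" using cvx y1C y2C B0 B1 by (intro convexD) auto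
    have "B *\<^sub>R y1 + (1 - B) *\<^sub>R y2 = p + (B * \<mu> * \<kappa> + (1 - B) * \<mu>) *\<^sub>R d + B *\<^sub>R e"
      unfolding y1_def y2_def q_eq by (simp add: algebra_simps)
    moreover have "B * \<mu> * \<kappa> + (1 - B) * \<mu> = \<kappa> * wd"
      unfolding B_def \<mu>_def wd_def using den t1nz by (intro sc1) auto
    moreover have "B = \<kappa> * we + 1"
      unfolding B_def we_def using t1nz by (simp add: field_simps)
    ultimately have "B *\<^sub>R y1 + (1 - B) *\<^sub>R y2 = p + (\<kappa> * wd) *\<^sub>R d + (\<kappa> * we + 1) *\<^sub>R e"
      by simp
    then show ?thesis using mem T_eq by metis
  next
    case False
    have taup: "\<tau> > 0" using False tau0 by (cases "\<tau> = 0") auto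
    define s where "s = (\<kappa> * \<tau> + \<tau> - 1) / \<tau>"
    have s0: "0 \<le> s" and s1: "s \<le> 1" using False taup a1k a1 by (auto simp: s_def field_simps)
    define y2 where "y2 = (1 - \<mu>) *\<^sub>R p + \<mu> *\<^sub>R q"
    show ?thesis
    proof (cases "1 - \<kappa> * \<tau> = 0")
      case True
      then have "a1 = 0" using a1 a1k by (simp add: mult.commute)
      then have "\<kappa> * wd = wd" "\<kappa> * we + 1 = we"
        using True t1nz by (auto simp: wd_def we_def field_simps)
      then have "p + \<kappa> *\<^sub>R (w - p) + e = w"
        using T_eq w_eq by simp
      then show ?thesis using wC by simp
    next
      case nz: False
      then have den: "1 - \<kappa> * \<tau> > 0" using a1k a1 by (simp add: mult.commute)
      have mu0: "0 \<le> \<mu>" and mu1: "\<mu> \<le> 1" using a1 a1k den by (auto simp: \<mu>_def field_simps)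
      have y2C: "y2 \<in> C" unfolding y2_def using cvx pC qC mu0 mu1 by (intro convexD) auto
      have mem: "s *\<^sub>R w + (1 - s) *\<^sub>R y2 \<in> C" using cvx wC y2C s0 s1 by (intro convexD) auto
      have "s *\<^sub>R w + (1 - s) *\<^sub>R y2 = p + (s * wd + (1 - s) * \<mu>) *\<^sub>R d + (s * we) *\<^sub>R e"
        unfolding w_eq y2_def q_eq by (simp add: algebra_simps)
      moreover have "s * wd + (1 - s) * \<mu> = \<kappa> * wd"
        unfolding s_def \<mu>_def wd_def using den t1nz taup by (intro sc2) auto
      moreover have "s * we = \<kappa> * we + 1"
        unfolding s_def we_def using t1nz taup by (simp add: field_simps)
      ultimately have "s *\<^sub>R w + (1 - s) *\<^sub>R y2 = p + (\<kappa> * wd) *\<^sub>R d + (\<kappa> * we + 1) *\<^sub>R e"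
        by simp
      then show ?thesis using mem T_eq by metis
    qed
  qed
qed


lemma seg_coef_eq:
  fixes p q :: "real^2"
  assumes "p + c *\<^sub>R (q - p) \<in> closed_segment p q" "p \<noteq> q"
  shows "0 \<le> c \<and> c \<le> 1"
proof -
  obtain u where u: "0 \<le> u" "u \<le> 1" "p + c *\<^sub>R (q - p) = p + u *\<^sub>R (q - p)"
    using seg_coef[OF assms(1)] by blast
  then have "c *\<^sub>R (q - p) = u *\<^sub>R (q - p)" by simp
  then have "c = u" using assms(2) by (simp add: scaleR_cancel_right)
  then show ?thesis using u by simp
qed

locale vs2 = vs +
  fixes p q :: "real^2"
  assumes pq: "p \<noteq> q"
  and gp: "\<forall>F. side_of F Q \<longrightarrow> (\<forall>a\<in>F. \<forall>b\<in>F. a \<noteq> b \<longrightarrow> \<not> parallel_dir p q a b)"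
  and cQ: "compact Q" and intQ: "0 \<in> interior Q"
begin

definition "d = q - p"
definition "Cx x = {z. G (x - z) \<le> G (x - p)}"
definition "Bis x \<longleftrightarrow> G (x - p) = G (x - q)"
definition "Le x x' \<longleftrightarrow> (\<forall>z\<in>Cx x. cross2 d (z - p) \<ge> 0 \<longrightarrow> z \<in> Cx x') \<and>
                        (\<forall>z\<in>Cx x'. cross2 d (z - p) \<le> 0 \<longrightarrow> z \<in> Cx x)"

lemma dnz: "d \<noteq> 0" using pq by (simp add: d_def)

lemma convQ: "convex Q"
proof (rule convexI)
  fix x y and u v :: real assume h: "x \<in> Q" "y \<in> Q" "0 \<le> u" "0 \<le> v" "u + v = 1"
  have "G (u *\<^sub>R x + v *\<^sub>R y) \<le> u * G x + v * G y"
    using G_convex h unfolding convex_on_def by blast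
  also have "\<dots> \<le> u * 1 + v * 1" using h inQ by (intro add_mono mult_left_mono) auto
  finally show "u *\<^sub>R x + v *\<^sub>R y \<in> Q" using h inQ by simp
qed

lemma GPL:
  assumes a: "a \<in> A" "a \<bullet> d = 0" "a \<bullet> v = r" and Gv: "G v \<le> r" "G (v - c *\<^sub>R d) \<le> r"
    and c: "c \<noteq> 0" and r: "r > 0"
  shows False
proof -
  define u1 where "u1 = (1 / r) *\<^sub>R v"
  define u2 where "u2 = (1 / r) *\<^sub>R (v - c *\<^sub>R d)"
  have u1Q: "u1 \<in> Q" using G_scale[of "1/r" v] r Gv inQ by (simp add: u1_def)
  have u2Q: "u2 \<in> Q" using G_scale[of "1/r" "v - c *\<^sub>R d"] r Gv inQ by (simp add: u2_def)
  have au1: "a \<bullet> u1 = 1" using a r by (simp add: u1_def)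
  have au2: "a \<bullet> u2 = 1" using a r by (simp add: u2_def inner_diff_right)
  have ne: "u1 \<noteq> u2" using c dnz r by (simp add: u1_def u2_def)
  define F where "F = Q \<inter> {u. a \<bullet> u = 1}"
  have face: "F face_of Q" unfolding F_def
    by (rule face_of_Int_supporting_hyperplane_le[OF convQ]) (use Qdef a(1) in auto)
  have anz: "a \<noteq> 0" using au1 by auto
  have "aff_dim F \<le> aff_dim {u. a \<bullet> u = 1}" by (rule aff_dim_subset) (auto simp: F_def)
  also have "\<dots> = 1" using anz by simp
  finally have le1: "aff_dim F \<le> 1" .
  have "aff_dim {u1, u2} \<le> aff_dim F" by (rule aff_dim_subset) (use u1Q u2Q au1 au2 in \<open>auto simp: F_def\<close>)
  then have "aff_dim F = 1" using le1 ne by simp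
  then have "side_of F Q" using face by (simp add: side_of_def)
  moreover have "parallel_dir p q u1 u2"
    unfolding parallel_dir_def u1_def u2_def
    by (simp add: d_def[symmetric] cross2_diff cross2_scale cross2_self cross2_minus algebra_simps)
  moreover have "u1 \<in> F" "u2 \<in> F" using u1Q u2Q au1 au2 by (auto simp: F_def)
  ultimately show False using gp ne by blast
qed

lemma NB:
  assumes r: "r > 0" and t: "t1 < t2" "t2 < t3"
    and g: "G (v - t1 *\<^sub>R d) \<le> r" "G (v - t2 *\<^sub>R d) = r" "G (v - t3 *\<^sub>R d) \<le> r"
  shows False
proof -
  obtain a where a: "a \<in> A" "a \<bullet> (v - t2 *\<^sub>R d) = r" using G_attain g(2) by metis
  have h1: "a \<bullet> (v - t1 *\<^sub>R d) \<le> r" using G_ge[OF a(1)] g(1) by (meson order.trans)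
  have h3: "a \<bullet> (v - t3 *\<^sub>R d) \<le> r" using G_ge[OF a(1)] g(3) by (meson order.trans)
  have "(t2 - t1) * (a \<bullet> d) \<le> 0" using a(2) h1 by (simp add: inner_diff_right algebra_simps)
  then have "a \<bullet> d \<le> 0" using t by (simp add: mult_le_0_iff)
  moreover have "(t3 - t2) * (a \<bullet> d) \<ge> 0" using a(2) h3 by (simp add: inner_diff_right algebra_simps)
  then have "a \<bullet> d \<ge> 0" using t by (simp add: zero_le_mult_iff)
  ultimately have ad: "a \<bullet> d = 0" by simp
  have "(v - t2 *\<^sub>R d) - (t3 - t2) *\<^sub>R d = v - t3 *\<^sub>R d" by (simp add: algebra_simps)
  then have g3: "G ((v - t2 *\<^sub>R d) - (t3 - t2) *\<^sub>R d) \<le> r" using g(3) by metis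
  have g2: "G (v - t2 *\<^sub>R d) \<le> r" using g(2) by simp
  have "t3 - t2 \<noteq> 0" using t by simp
  then show False using GPL[OF a(1) ad a(2) g2 g3 _ r] by blast
qed

lemma r_pos: assumes "Bis x" shows "G (x - p) > 0"
proof (rule ccontr)
  assume "\<not> G (x - p) > 0"
  then have "G (x - p) = 0" using G_nonneg[of "x - p"] by simp
  then have "x = p" "x = q" using assms G_pos unfolding Bis_def by (metis less_irrefl right_minus_eq)+
  then show False using pq by simp
qed

lemma p_in: "Bis x \<Longrightarrow> p \<in> Cx x" by (simp add: Cx_def)
lemma q_in: "Bis x \<Longrightarrow> q \<in> Cx x" by (simp add: Cx_def Bis_def)

lemma convCx: "convex (Cx x)"
proof (rule convexI)
  fix y z and u v :: real assume h: "y \<in> Cx x" "z \<in> Cx x" "0 \<le> u" "0 \<le> v" "u + v = 1"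
  have eq0: "u *\<^sub>R (x - y) + v *\<^sub>R (x - z) = (u + v) *\<^sub>R x - (u *\<^sub>R y + v *\<^sub>R z)"
    by (simp add: algebra_simps)
  have eq: "x - (u *\<^sub>R y + v *\<^sub>R z) = u *\<^sub>R (x - y) + v *\<^sub>R (x - z)"
    unfolding eq0 h(5) by simp
  have "G (u *\<^sub>R (x - y) + v *\<^sub>R (x - z)) \<le> u * G (x - y) + v * G (x - z)"
    using G_convex h unfolding convex_on_def by blast
  also have "\<dots> \<le> u * G (x - p) + v * G (x - p)" using h by (intro add_mono mult_left_mono) (auto simp: Cx_def)
  also have "\<dots> = G (x - p)" using h(5) by (metis distrib_right mult_1)
  finally have "G (x - (u *\<^sub>R y + v *\<^sub>R z)) \<le> G (x - p)" using eq by metis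
  then show "u *\<^sub>R y + v *\<^sub>R z \<in> Cx x" unfolding Cx_def by simp
qed

lemma CH:
  assumes "Bis x" "z \<in> Cx x" "cross2 d (z - p) = 0"
  shows "z \<in> closed_segment p q"
proof -
  let ?r = "G (x - p)"
  have r: "?r > 0" using r_pos[OF assms(1)] .
  obtain s where s: "z - p = s *\<^sub>R d" using cross2_zero_par[OF dnz assms(3)] by blast
  define v where "v = x - p"
  have z: "x - z = v - s *\<^sub>R d" using s by (simp add: v_def algebra_simps)
  have g0: "G (v - 0 *\<^sub>R d) = ?r" by (simp add: v_def)
  have g1: "G (v - 1 *\<^sub>R d) = ?r" using assms(1) by (simp add: v_def d_def Bis_def algebra_simps)
  have gs: "G (v - s *\<^sub>R d) \<le> ?r" using assms(2) z by (simp add: Cx_def)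
  have "\<not> s > 1" using NB[OF r, of 0 1 s v] g0 g1 gs by auto
  moreover have "\<not> s < 0" using NB[OF r, of s 0 1 v] g0 g1 gs by auto
  ultimately have "0 \<le> s" "s \<le> 1" by auto
  have zeq: "z = p + s *\<^sub>R (q - p)" using s unfolding d_def by (metis add.commute diff_add_cancel)
  show ?thesis using seg_coef2[of s p q] \<open>0 \<le> s\<close> \<open>s \<le> 1\<close> zeq by simp
qed

lemma scale_le_iff: "(r::real) > 0 \<Longrightarrow> r' > 0 \<Longrightarrow> (r / r') * g \<le> r \<longleftrightarrow> g \<le> r'"
  by (auto simp: field_simps mult_le_cancel_left_pos)

lemma hom:
  assumes "Bis x" "Bis x'"
  shows "z \<in> Cx x' \<longleftrightarrow> x + (G (x - p) / G (x' - p)) *\<^sub>R (z - x') \<in> Cx x"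
proof -
  let ?r = "G (x - p)" and ?r' = "G (x' - p)"
  have r: "?r > 0" "?r' > 0" using r_pos assms by auto
  have e1: "x - (x + (?r / ?r') *\<^sub>R (z - x')) = (?r / ?r') *\<^sub>R (x' - z)" by (simp add: algebra_simps)
  have e2: "G ((?r / ?r') *\<^sub>R (x' - z)) = (?r / ?r') * G (x' - z)"
    using G_scale r by simp
  show ?thesis unfolding Cx_def mem_Collect_eq e1 e2 using scale_le_iff[OF r] by simp
qed

end


context vs2 begin

lemma Le_refl: "Le x x" by (simp add: Le_def)

lemma seg_d: "p + c *\<^sub>R d \<in> closed_segment p q \<Longrightarrow> 0 \<le> c \<and> c \<le> 1"
  using seg_coef_eq pq by (simp add: d_def)

lemma on_line:
  assumes "Bis y" "z \<in> Cx y" "z - p = c *\<^sub>R d"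
  shows "0 \<le> c \<and> c \<le> 1"
proof -
  have "cross2 d (z - p) = 0" using assms(3) by (simp add: cross2_scale cross2_self)
  then have "z \<in> closed_segment p q" using CH assms(1,2) by blast
  moreover have "z = p + c *\<^sub>R d" using assms(3) by (metis add.commute diff_add_cancel)
  ultimately show ?thesis using seg_d by simp
qed

lemma CMP:
  assumes bx: "Bis x" and bx': "Bis x'"
  shows "Le x x' \<or> Le x' x"
proof -
  define r where "r = G (x - p)"
  define r' where "r' = G (x' - p)"
  have rp: "r > 0" "r' > 0" using r_pos assms by (auto simp: r_def r'_def)
  define lm where "lm = r' / r"
  define \<kappa> where "\<kappa> = r / r'"
  have lp: "lm > 0" "\<kappa> > 0" using rp by (auto simp: lm_def \<kappa>_def)
  have kl: "\<kappa> * lm = 1" "lm * \<kappa> = 1" using rp by (auto simp: lm_def \<kappa>_def)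
  define phi where "phi w = x' + lm *\<^sub>R (w - x)" for w
  define psi where "psi w = x + \<kappa> *\<^sub>R (w - x')" for w
  have H1: "z \<in> Cx x' \<longleftrightarrow> psi z \<in> Cx x" for z
    using hom[OF bx bx'] by (simp add: psi_def \<kappa>_def r_def r'_def)
  have H2: "z \<in> Cx x \<longleftrightarrow> phi z \<in> Cx x'" for z
    using hom[OF bx' bx] by (simp add: phi_def lm_def r_def r'_def)
  have psi_form: "psi w = p + \<kappa> *\<^sub>R (w - p) + (psi p - p)" for w
    by (simp add: psi_def algebra_simps)
  have phi_form: "phi w = p + lm *\<^sub>R (w - p) + (phi p - p)" for w
    by (simp add: phi_def algebra_simps)
  have pp: "psi p - p = - \<kappa> *\<^sub>R (phi p - p)"
  proof -
    have "- \<kappa> *\<^sub>R (phi p - p) = - \<kappa> *\<^sub>R x' - (\<kappa> * lm) *\<^sub>R (p - x) + \<kappa> *\<^sub>R p"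
      by (simp add: phi_def algebra_simps)
    also have "\<dots> = psi p - p" by (simp add: kl psi_def algebra_simps)
    finally show ?thesis by simp
  qed
  define \<beta> where "\<beta> = cross2 d (phi p - p)"
  have cpsi: "cross2 d (psi p - p) = - \<kappa> * \<beta>" unfolding pp \<beta>_def by (simp add: cross2_scale cross2_minus)
  have chx: "\<forall>z\<in>Cx x. cross2 (q - p) (z - p) = 0 \<longrightarrow> z \<in> closed_segment p q"
    using CH[OF bx] by (simp add: d_def)
  have chx': "\<forall>z\<in>Cx x'. cross2 (q - p) (z - p) = 0 \<longrightarrow> z \<in> closed_segment p q"
    using CH[OF bx'] by (simp add: d_def)
  have A1: "w \<in> Cx x'" if "c * cross2 d (psi p - p) < 0" "w \<in> Cx x" "c * cross2 d (w - p) \<ge> 0" for c w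
  proof -
    have "p + \<kappa> *\<^sub>R (w - p) + (psi p - p) \<in> Cx x"
    proof (rule LX[OF convCx p_in[OF bx] q_in[OF bx] pq _ _ lp(2) _ chx])
      show "p + (psi p - p) \<in> Cx x" using H1 p_in[OF bx'] by simp
      show "p + \<kappa> *\<^sub>R (q - p) + (psi p - p) \<in> Cx x" using H1 q_in[OF bx'] psi_form[of q] by simp
      show "c * cross2 (q - p) (psi p - p) < 0" using that(1) by (simp add: d_def)
      show "w \<in> Cx x" by fact
      show "c * cross2 (q - p) (w - p) \<ge> 0" using that(3) by (simp add: d_def)
    qed
    then show ?thesis using H1 psi_form[of w] by simp
  qed
  have A2: "w \<in> Cx x" if "c * cross2 d (phi p - p) < 0" "w \<in> Cx x'" "c * cross2 d (w - p) \<ge> 0" for c w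
  proof -
    have "p + lm *\<^sub>R (w - p) + (phi p - p) \<in> Cx x'"
    proof (rule LX[OF convCx p_in[OF bx'] q_in[OF bx'] pq _ _ lp(1) _ chx'])
      show "p + (phi p - p) \<in> Cx x'" using H2 p_in[OF bx] by simp
      show "p + lm *\<^sub>R (q - p) + (phi p - p) \<in> Cx x'" using H2 q_in[OF bx] phi_form[of q] by simp
      show "c * cross2 (q - p) (phi p - p) < 0" using that(1) by (simp add: d_def)
      show "w \<in> Cx x'" by fact
      show "c * cross2 (q - p) (w - p) \<ge> 0" using that(3) by (simp add: d_def)
    qed
    then show ?thesis using H2 phi_form[of w] by simp
  qed
  consider "\<beta> > 0" | "\<beta> < 0" | "\<beta> = 0" by linarith
  then show ?thesis
  proof cases
    case 1
    have "Le x x'" unfolding Le_def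
    proof (intro conjI ballI impI)
      fix z assume "z \<in> Cx x" "0 \<le> cross2 d (z - p)"
      then show "z \<in> Cx x'" using A1[of 1 z] cpsi 1 lp by (simp add: mult_pos_pos)
    next
      fix z assume "z \<in> Cx x'" "cross2 d (z - p) \<le> 0"
      then show "z \<in> Cx x" using A2[of "-1" z] 1 by (simp add: \<beta>_def)
    qed
    then show ?thesis by simp
  next
    case 2
    have "Le x' x" unfolding Le_def
    proof (intro conjI ballI impI)
      fix z assume "z \<in> Cx x'" "0 \<le> cross2 d (z - p)"
      then show "z \<in> Cx x" using A2[of 1 z] 2 by (simp add: \<beta>_def)
    next
      fix z assume "z \<in> Cx x" "cross2 d (z - p) \<le> 0"
      then show "z \<in> Cx x'" using A1[of "-1" z] cpsi 2 lp by (simp add: mult_pos_neg)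
    qed
    then show ?thesis by simp
  next
    case 3
    have "cross2 d (phi p - p) = 0" using 3 by (simp add: \<beta>_def)
    then obtain c1 where c1: "phi p - p = c1 *\<^sub>R d" using cross2_zero_par dnz by blast
    have php: "phi p \<in> Cx x'" using H2 p_in[OF bx] by simp
    have c1b: "0 \<le> c1 \<and> c1 \<le> 1" using on_line[OF bx' php c1] .
    have e3: "phi q - p = (c1 + lm) *\<^sub>R d"
      using c1 by (simp add: phi_def d_def algebra_simps)
    have qin': "phi q \<in> Cx x'" using H2 q_in[OF bx] by simp
    have c2b: "c1 + lm \<le> 1" using on_line[OF bx' qin' e3] by blast
    have e: "psi p - p = (- \<kappa> * c1) *\<^sub>R d" using pp c1 by simp
    have pin: "psi p \<in> Cx x" using H1 p_in[OF bx'] by simp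
    have "0 \<le> - \<kappa> * c1" using on_line[OF bx pin e] by blast
    then have c10: "c1 = 0" using c1b lp by (simp add: mult_le_0_iff)
    have e2: "psi q - p = \<kappa> *\<^sub>R d"
      using psi_form[of q] c10 pp c1 by (simp add: d_def)
    have qin: "psi q \<in> Cx x" using H1 q_in[OF bx'] by simp
    have "\<kappa> \<le> 1" using on_line[OF bx qin e2] by blast
    moreover have "lm \<le> 1" using c2b c10 by simp
    ultimately have "lm = 1" using kl lp
      by (metis dual_order.antisym mult_le_cancel_left1 mult.right_neutral order_less_le)
    then have "phi p = p" using c1 c10 by simp
    then have "x' = x" using \<open>lm = 1\<close> by (simp add: phi_def algebra_simps)
    then show ?thesis using Le_refl by simp
  qed
qed

end


context vs2 begin

lemma cont_cross: "continuous_on S (\<lambda>u. cross2 d u)"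
  unfolding cross2_def by (intro continuous_intros)

lemma Qne: "Q \<noteq> {}" using zero_Q by auto

definition "um = (SOME u. u \<in> Q \<and> (\<forall>v\<in>Q. cross2 d u \<le> cross2 d v))"
definition "uM = (SOME u. u \<in> Q \<and> (\<forall>v\<in>Q. cross2 d v \<le> cross2 d u))"

lemma um: "um \<in> Q" "\<forall>v\<in>Q. cross2 d um \<le> cross2 d v"
proof -
  have "\<exists>u. u \<in> Q \<and> (\<forall>v\<in>Q. cross2 d u \<le> cross2 d v)"
    using continuous_attains_inf[OF cQ Qne cont_cross] by blast
  then have "um \<in> Q \<and> (\<forall>v\<in>Q. cross2 d um \<le> cross2 d v)" unfolding um_def by (rule someI_ex)
  then show "um \<in> Q" "\<forall>v\<in>Q. cross2 d um \<le> cross2 d v" by auto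
qed

lemma uM: "uM \<in> Q" "\<forall>v\<in>Q. cross2 d v \<le> cross2 d uM"
proof -
  have "\<exists>u. u \<in> Q \<and> (\<forall>v\<in>Q. cross2 d v \<le> cross2 d u)"
    using continuous_attains_sup[OF cQ Qne cont_cross] by blast
  then have "uM \<in> Q \<and> (\<forall>v\<in>Q. cross2 d v \<le> cross2 d uM)" unfolding uM_def by (rule someI_ex)
  then show "uM \<in> Q" "\<forall>v\<in>Q. cross2 d v \<le> cross2 d uM" by auto
qed

definition "Tp x = cross2 d x - G (x - p) * cross2 d um"
definition "Bt x = cross2 d x - G (x - p) * cross2 d uM"
definition "sig x = Tp x + Bt x"

lemma in_bounds:
  assumes "Bis x" "z \<in> Cx x"
  shows "Bt x \<le> cross2 d z \<and> cross2 d z \<le> Tp x"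
proof -
  let ?r = "G (x - p)"
  have r: "?r > 0" using r_pos assms(1) .
  define u where "u = (1 / ?r) *\<^sub>R (x - z)"
  have "G u = G (x - z) / ?r" using G_scale[of "1 / ?r"] r by (simp add: u_def)
  then have uQ: "u \<in> Q" using assms(2) r inQ by (simp add: Cx_def)
  have "z = x - ?r *\<^sub>R u" using r by (simp add: u_def)
  then have cz: "cross2 d z = cross2 d x - ?r * cross2 d u" by (simp add: cross2_diff cross2_scale)
  have "?r * cross2 d um \<le> ?r * cross2 d u" using um uQ r by (simp add: mult_left_mono)
  moreover have "?r * cross2 d u \<le> ?r * cross2 d uM" using uM uQ r by (simp add: mult_left_mono)
  ultimately show ?thesis using cz by (simp add: Tp_def Bt_def)
qed

lemma top_in:
  assumes "Bis x"
  shows "x - G (x - p) *\<^sub>R um \<in> Cx x" "cross2 d (x - G (x - p) *\<^sub>R um) = Tp x"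
    "x - G (x - p) *\<^sub>R uM \<in> Cx x" "cross2 d (x - G (x - p) *\<^sub>R uM) = Bt x"
proof -
  let ?r = "G (x - p)"
  have r: "?r > 0" using r_pos assms(1) .
  have "G (?r *\<^sub>R um) \<le> ?r" using G_scale[OF r] um inQ r by (simp add: mult_le_cancel_left1)
  then show "x - ?r *\<^sub>R um \<in> Cx x" by (simp add: Cx_def)
  have "G (?r *\<^sub>R uM) \<le> ?r" using G_scale[OF r] uM inQ r by (simp add: mult_le_cancel_left1)
  then show "x - ?r *\<^sub>R uM \<in> Cx x" by (simp add: Cx_def)
  show "cross2 d (x - ?r *\<^sub>R um) = Tp x" by (simp add: Tp_def cross2_diff cross2_scale)
  show "cross2 d (x - ?r *\<^sub>R uM) = Bt x" by (simp add: Bt_def cross2_diff cross2_scale)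
qed


lemma MONO:
  assumes "Bis x" "Bis x'" "Le x x'"
  shows "Tp x \<le> Tp x'" "Bt x \<le> Bt x'"
proof -
  let ?z0 = "x - G (x - p) *\<^sub>R um"
  have "cross2 d p \<le> Tp x" using in_bounds[OF assms(1) p_in[OF assms(1)]] by simp
  then have "cross2 d (?z0 - p) \<ge> 0" using top_in[OF assms(1)] by (simp add: cross2_diff)
  then have "?z0 \<in> Cx x'" using assms(3) top_in[OF assms(1)] by (simp add: Le_def)
  then show "Tp x \<le> Tp x'" using in_bounds[OF assms(2) \<open>?z0 \<in> Cx x'\<close>] top_in(2)[OF assms(1)] by simp
  let ?z1 = "x' - G (x' - p) *\<^sub>R uM"
  have "Bt x' \<le> cross2 d p" using in_bounds[OF assms(2) p_in[OF assms(2)]] by simp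
  then have "cross2 d (?z1 - p) \<le> 0" using top_in[OF assms(2)] by (simp add: cross2_diff)
  then have "?z1 \<in> Cx x" using assms(3) top_in[OF assms(2)] by (simp add: Le_def)
  then show "Bt x \<le> Bt x'" using in_bounds[OF assms(1) \<open>?z1 \<in> Cx x\<close>] top_in(4)[OF assms(2)] by simp
qed

lemma sig_mono: "Bis x \<Longrightarrow> Bis x' \<Longrightarrow> Le x x' \<Longrightarrow> sig x \<le> sig x'"
  using MONO by (simp add: sig_def add_mono)

lemma Wpos: "cross2 d um < 0" "0 < cross2 d uM"
proof -
  obtain \<epsilon> where ep: "\<epsilon> > 0" "ball 0 \<epsilon> \<subseteq> Q" using intQ by (meson mem_interior)
  define v0 :: "real^2" where "v0 = (\<chi> i. if i = 1 then - (d$2) else d$1)"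
  have c0: "cross2 d v0 = d$1 * d$1 + d$2 * d$2" by (simp add: v0_def cross2_def)
  have "d$1 \<noteq> 0 \<or> d$2 \<noteq> 0" using dnz by (metis vec_eq_iff exhaust_2 zero_index)
  moreover have "0 \<le> d$1 * d$1" "0 \<le> d$2 * d$2" by simp_all
  moreover have "d$1 \<noteq> 0 \<longrightarrow> 0 < d$1 * d$1" "d$2 \<noteq> 0 \<longrightarrow> 0 < d$2 * d$2" by (metis not_real_square_gt_zero)+
  ultimately have cpos: "cross2 d v0 > 0" unfolding c0 by linarith
  then have v0nz: "v0 \<noteq> 0" by (auto simp: cross2_def)
  define u where "u = (\<epsilon> / (2 * norm v0)) *\<^sub>R v0"
  have nu: "norm u = \<epsilon> / 2" using v0nz ep by (simp add: u_def)
  then have "u \<in> Q" "- u \<in> Q" using ep by auto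
  have cu: "cross2 d u > 0" using cpos v0nz ep by (simp add: u_def cross2_scale)
  have "cross2 d um \<le> cross2 d (- u)" using um(2) \<open>- u \<in> Q\<close> by blast
  then show "cross2 d um < 0" using cu by (simp add: cross2_minus)
  have "cross2 d u \<le> cross2 d uM" using uM(2) \<open>u \<in> Q\<close> by blast
  then show "0 < cross2 d uM" using cu by simp
qed

lemma EQ:
  assumes bx: "Bis x" and bx': "Bis x'" and le: "Le x x'" and s: "sig x = sig x'"
  shows "x = x'"
proof -
  have t: "Tp x = Tp x'" and b: "Bt x = Bt x'" using MONO[OF bx bx' le] s by (auto simp: sig_def)
  let ?r = "G (x - p)" and ?r' = "G (x' - p)"
  have "Tp x - Bt x = ?r * (cross2 d uM - cross2 d um)" by (simp add: Tp_def Bt_def algebra_simps)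
  moreover have "Tp x' - Bt x' = ?r' * (cross2 d uM - cross2 d um)" by (simp add: Tp_def Bt_def algebra_simps)
  moreover have "cross2 d uM - cross2 d um > 0" using Wpos by simp
  ultimately have rr: "?r = ?r'" using t b by simp
  then have "cross2 d x = cross2 d x'" using t by (simp add: Tp_def)
  then have "cross2 d (x' - x) = 0" by (simp add: cross2_diff)
  then obtain t where tt: "x' - x = t *\<^sub>R d" using cross2_zero_par dnz by blast
  define v where "v = x - p"
  have r: "?r > 0" using r_pos bx .
  have g0: "G (v - 0 *\<^sub>R d) = ?r" by (simp add: v_def)
  have g1: "G (v - 1 *\<^sub>R d) = ?r" using bx by (simp add: v_def d_def Bis_def algebra_simps)
  have x'p: "x' - p = v - (- t) *\<^sub>R d" using tt by (simp add: v_def algebra_simps)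
  have g2: "G (v - (- t) *\<^sub>R d) = ?r" using rr x'p by simp
  have x'q: "x' - q = v - (1 - t) *\<^sub>R d" using tt by (simp add: v_def d_def algebra_simps)
  have g3: "G (v - (1 - t) *\<^sub>R d) = ?r" using rr x'q bx' by (simp add: Bis_def)
  have "\<not> t > 0" using NB[OF r, of "- t" 0 1 v] g0 g1 g2 by auto
  moreover have "\<not> t < 0" using NB[OF r, of 0 1 "1 - t" v] g0 g1 g3 by auto
  ultimately have "t = 0" by simp
  then show ?thesis using tt by simp
qed


lemma INJ: assumes "Bis x" "Bis x'" "sig x = sig x'" shows "x = x'"
proof -
  have "Le x x' \<or> Le x' x" using CMP[OF assms(1,2)] .
  then show ?thesis
  proof
    assume "Le x x'" then show ?thesis using EQ[OF assms(1,2)] assms(3) by blast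
  next
    assume "Le x' x" then have "x' = x" using EQ[OF assms(2,1)] assms(3) by simp
    then show ?thesis by simp
  qed
qed


lemma BTW:
  assumes bx: "Bis x" and b1: "Bis w1" and b2: "Bis w2"
    and s1: "sig w1 \<le> sig x" and s2: "sig x \<le> sig w2"
  shows "Cx x \<subseteq> Cx w1 \<union> Cx w2"
proof -
  have l1: "Le w1 x"
  proof (cases "Le x w1")
    case True
    then have "sig x \<le> sig w1" by (rule sig_mono[OF bx b1])
    then have "sig x = sig w1" using s1 by simp
    then have "x = w1" by (rule INJ[OF bx b1])
    then show ?thesis using Le_refl by simp
  next
    case False
    then show ?thesis using CMP[OF bx b1] by simp
  qed
  have l2: "Le x w2"
  proof (cases "Le w2 x")
    case True
    then have "sig w2 \<le> sig x" by (rule sig_mono[OF b2 bx])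
    then have "sig x = sig w2" using s2 by simp
    then have "x = w2" by (rule INJ[OF bx b2])
    then show ?thesis using Le_refl by simp
  next
    case False
    then show ?thesis using CMP[OF bx b2] by simp
  qed
  show ?thesis
  proof
    fix z assume z: "z \<in> Cx x"
    show "z \<in> Cx w1 \<union> Cx w2"
    proof (cases "cross2 d (z - p) \<ge> 0")
      case True
      have "\<forall>z\<in>Cx x. cross2 d (z - p) \<ge> 0 \<longrightarrow> z \<in> Cx w2" using l2 unfolding Le_def by (rule conjunct1)
      then show ?thesis using z True by blast
    next
      case False
      have "\<forall>z\<in>Cx x. cross2 d (z - p) \<le> 0 \<longrightarrow> z \<in> Cx w1" using l1 unfolding Le_def by (rule conjunct2)
      then show ?thesis using z False by auto
    qed
  qed
qed


lemma sig_cont: "continuous_on S sig"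
proof -
  have "continuous_on UNIV (\<lambda>x. G (x - p))"
    by (rule continuous_on_compose2[OF G_cont]) (auto intro!: continuous_intros)
  then have c1: "continuous_on S (\<lambda>x. G (x - p))" by (rule continuous_on_subset) auto
  have "continuous_on S (\<lambda>x. (cross2 d x - G (x - p) * cross2 d um) + (cross2 d x - G (x - p) * cross2 d uM))"
    by (intro continuous_on_add continuous_on_diff continuous_on_mult c1 cont_cross continuous_on_const)
  then show ?thesis unfolding sig_def Tp_def Bt_def .
qed

end


lemma endp:
  fixes f :: "real^2 \<Rightarrow> real"
  assumes cont: "continuous_on S f" and inj: "inj_on f S" and w: "w \<in> S"
    and con: "connected (S - {w})"
  shows "(\<forall>y\<in>S. f w \<le> f y) \<or> (\<forall>y\<in>S. f y \<le> f w)"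
proof (rule ccontr)
  assume "\<not> ?thesis"
  then obtain a b where ab: "a \<in> S" "b \<in> S" "f a < f w" "f w < f b" by (auto simp: not_le)
  have "connected (f ` (S - {w}))"
    using connected_continuous_image[OF continuous_on_subset[OF cont] con] by auto
  moreover have "f a \<in> f ` (S - {w})" "f b \<in> f ` (S - {w})" using ab by auto
  ultimately have "f w \<in> f ` (S - {w})" using ab unfolding connected_iff_interval
    by (meson less_imp_le)
  then obtain c where c: "c \<in> S - {w}" "f w = f c" by blast
  then show False using inj w by (metis DiffE inj_onD singletonI)
qed

lemma between:
  fixes f :: "real^2 \<Rightarrow> real"
  assumes cont: "continuous_on S f" and inj: "inj_on f S" and w: "w1 \<in> S" "w2 \<in> S" "w1 \<noteq> w2"
    and con: "connected (S - {w1})" "connected (S - {w2})" and x: "x \<in> S"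
  shows "(f w1 \<le> f x \<and> f x \<le> f w2) \<or> (f w2 \<le> f x \<and> f x \<le> f w1)"
proof -
  have ne: "f w1 \<noteq> f w2" using inj w by (meson inj_onD)
  have e1: "(\<forall>y\<in>S. f w1 \<le> f y) \<or> (\<forall>y\<in>S. f y \<le> f w1)" using endp[OF cont inj w(1) con(1)] .
  have e2: "(\<forall>y\<in>S. f w2 \<le> f y) \<or> (\<forall>y\<in>S. f y \<le> f w2)" using endp[OF cont inj w(2) con(2)] .
  show ?thesis using e1 e2 ne w x by (meson antisym)
qed

lemma seg_minus_conn:
  fixes a b :: "real^2"
  assumes "a \<noteq> b"
  shows "connected (closed_segment a b - {a})" "connected (closed_segment a b - {b})"
proof -
  have c: "connected (open_segment a b)" by (simp add: convex_connected)
  have cl: "closure (open_segment a b) = closed_segment a b" using assms by simp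
  show "connected (closed_segment a b - {a})"
    by (rule connected_intermediate_closure[OF c]) (unfold cl, auto simp: open_segment_def)
  show "connected (closed_segment a b - {b})"
    by (rule connected_intermediate_closure[OF c]) (unfold cl, auto simp: open_segment_def)
qed



lemma halfspace_norm:
  fixes a v :: "real^2" and b :: real
  assumes "b > 0"
  shows "a \<bullet> v \<le> b \<longleftrightarrow> ((1 / b) *\<^sub>R a) \<bullet> v \<le> 1"
  using assms by (simp add: divide_le_eq_1_pos)

theorem lemma3:
  fixes Q Y :: "(real^2) set" and e :: "(real^2) set" and w1 w2 x :: "real^2"
  assumes "polytope Q" and "0 \<in> interior Q"
    and "finite Y" and "general_position Q Y"
    and "voronoi_edge Q Y e"
    and "(adjacent_on_edge Q Y e w1 w2 \<and> x \<in> closed_segment w1 w2) \<or>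
         (voronoi_vertex Q Y w1 \<and> voronoi_vertex Q Y w2 \<and> w1 \<noteq> w2 \<and>
          curve_endpoint e w1 \<and> curve_endpoint e w2 \<and> x \<in> e)"
  shows "Qstar_at Q Y x \<subseteq> Qstar_at Q Y w1 \<union> Qstar_at Q Y w2"
proof -
  have "polyhedron Q" using polytope_imp_polyhedron assms(1) by blast
  then obtain F where F: "finite F" "Q = \<Inter> F" "\<forall>h\<in>F. \<exists>a b. a \<noteq> 0 \<and> h = {x. a \<bullet> x \<le> b}"
    unfolding polyhedron_def by blast
  define fa :: "(real^2) set \<Rightarrow> real^2" where "fa h = (SOME a. \<exists>b. a \<noteq> 0 \<and> h = {x. a \<bullet> x \<le> b})" for h
  define fb :: "(real^2) set \<Rightarrow> real" where "fb h = (SOME b. fa h \<noteq> 0 \<and> h = {x. fa h \<bullet> x \<le> b})" for h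
  have fab0: "fa h \<noteq> 0 \<and> h = {x. fa h \<bullet> x \<le> fb h}" if "h \<in> F" for h
  proof -
    have ex: "\<exists>a b. a \<noteq> 0 \<and> h = {x. a \<bullet> x \<le> b}" using F(3) that by (rule bspec)
    have "\<exists>b. fa h \<noteq> 0 \<and> h = {x. fa h \<bullet> x \<le> b}" unfolding fa_def using ex by (rule someI_ex)
    then show ?thesis unfolding fb_def by (rule someI_ex)
  qed
  have fab: "fa h \<noteq> 0" "h = {x. fa h \<bullet> x \<le> fb h}" if "h \<in> F" for h
    using fab0[OF that] by (rule conjunct1, rule conjunct2)
  have memh: "y \<in> h \<longleftrightarrow> fa h \<bullet> y \<le> fb h" if h: "h \<in> F" for h y
  proof -
    have "y \<in> h \<longleftrightarrow> y \<in> {x. fa h \<bullet> x \<le> fb h}" by (rule arg_cong[OF fab(2)[OF h]])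
    then show ?thesis by (simp only: mem_Collect_eq)
  qed
  have fbpos: "fb h > 0" if h: "h \<in> F" for h
  proof -
    have "Q \<subseteq> h" using F(2) h by blast
    then have "interior Q \<subseteq> interior h" by (rule interior_mono)
    then have "0 \<in> interior h" using assms(2) by blast
    moreover have "interior h = interior {x. fa h \<bullet> x \<le> fb h}" by (rule arg_cong[OF fab(2)[OF h]])
    ultimately have "0 \<in> interior {x. fa h \<bullet> x \<le> fb h}" by simp
    then show ?thesis using interior_halfspace_le[OF fab(1)[OF h]] by simp
  qed
  define A where "A = (\<lambda>h. (1 / fb h) *\<^sub>R fa h) ` F"
  have Qeq: "Q = {v. \<forall>a\<in>A. a \<bullet> v \<le> 1}"
  proof (intro set_eqI iffI)
    fix v assume vQ: "v \<in> Q"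
    have "\<forall>h\<in>F. fa h \<bullet> v \<le> fb h"
    proof
      fix h assume h: "h \<in> F"
      then have "v \<in> h" using vQ F(2) by blast
      then show "fa h \<bullet> v \<le> fb h" using memh[OF h] by blast
    qed
    then have "\<forall>h\<in>F. ((1 / fb h) *\<^sub>R fa h) \<bullet> v \<le> 1"
      using halfspace_norm[OF fbpos] by blast
    then show "v \<in> {v. \<forall>a\<in>A. a \<bullet> v \<le> 1}" by (simp add: A_def)
  next
    fix v assume "v \<in> {v. \<forall>a\<in>A. a \<bullet> v \<le> 1}"
    then have "\<forall>h\<in>F. ((1 / fb h) *\<^sub>R fa h) \<bullet> v \<le> 1" by (simp add: A_def)
    then have hh: "\<forall>h\<in>F. fa h \<bullet> v \<le> fb h" using halfspace_norm[OF fbpos] by blast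
    have "v \<in> h" if h: "h \<in> F" for h
    proof -
      show ?thesis using hh h memh[OF h] by blast
    qed
    then show "v \<in> Q" using F(2) by blast
  qed
  have cQ: "compact Q" using polytope_imp_compact assms(1) by blast
  then have bQ: "bounded Q" by (rule compact_imp_bounded)
  have Ane: "A \<noteq> {}"
  proof
    assume "A = {}"
    then have "Q = UNIV" using Qeq by auto
    then show False using bQ not_bounded_UNIV by metis
  qed
  have finA: "finite A" using F(1) by (simp add: A_def)
  obtain p q where pq: "p \<in> Y" "q \<in> Y" "p \<noteq> q" and e: "e = vcell Q Y p \<inter> vcell Q Y q"
    using assms(5) unfolding voronoi_edge_def by blast
  have gp: "\<forall>F. side_of F Q \<longrightarrow> (\<forall>a\<in>F. \<forall>b\<in>F. a \<noteq> b \<longrightarrow> \<not> parallel_dir p q a b)"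
    using assms(4) pq unfolding general_position_def by blast
  interpret V: vs2 A Q p q
    by (rule vs2.intro[OF vs.intro[OF finA Ane Qeq bQ] vs2_axioms.intro[OF pq(3) gp cQ assms(2)]])
  have in_e: "V.Bis z \<and> (\<forall>y\<in>Y. V.G (z - p) \<le> V.G (z - y))" if "z \<in> e" for z
  proof -
    have "\<forall>y\<in>Y. V.G (z - p) \<le> V.G (z - y)" "\<forall>y\<in>Y. V.G (z - q) \<le> V.G (z - y)"
      using that e unfolding vcell_def V.dQ_eq by auto
    then show ?thesis using pq unfolding V.Bis_def by (meson antisym)
  qed
  have QS: "Qstar_at Q Y z = V.Cx z" if "z \<in> e" for z
    using V.Qstar_eq[OF pq(1)] in_e[OF that] V.r_pos by (simp add: V.Cx_def)
  have inj: "inj_on V.sig e"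
  proof (rule inj_onI)
    fix a b assume ab: "a \<in> e" "b \<in> e" "V.sig a = V.sig b"
    show "a = b" using V.INJ[OF conjunct1[OF in_e[OF ab(1)]] conjunct1[OF in_e[OF ab(2)]] ab(3)] .
  qed
  have main: "Qstar_at Q Y x \<subseteq> Qstar_at Q Y w1 \<union> Qstar_at Q Y w2"
    if S: "S \<subseteq> e" "w1 \<in> S" "w2 \<in> S" "w1 \<noteq> w2" "connected (S - {w1})" "connected (S - {w2})" "x \<in> S"
    for S
  proof -
    have dj: "(V.sig w1 \<le> V.sig x \<and> V.sig x \<le> V.sig w2) \<or> (V.sig w2 \<le> V.sig x \<and> V.sig x \<le> V.sig w1)"
      using between[OF V.sig_cont inj_on_subset[OF inj S(1)] S(2,3,4,5,6,7)] .
    have b: "V.Bis x" "V.Bis w1" "V.Bis w2" using in_e S by auto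
    from dj have "V.Cx x \<subseteq> V.Cx w1 \<union> V.Cx w2"
    proof
      assume "V.sig w1 \<le> V.sig x \<and> V.sig x \<le> V.sig w2"
      then show ?thesis using V.BTW[OF b] by blast
    next
      assume "V.sig w2 \<le> V.sig x \<and> V.sig x \<le> V.sig w1"
      then have "V.Cx x \<subseteq> V.Cx w2 \<union> V.Cx w1" using V.BTW[OF b(1) b(3) b(2)] by blast
      then show ?thesis by blast
    qed
    then show ?thesis using QS S by auto
  qed
  from assms(6) show ?thesis
  proof
    assume h: "adjacent_on_edge Q Y e w1 w2 \<and> x \<in> closed_segment w1 w2"
    then have h2: "w1 \<noteq> w2" "closed_segment w1 w2 \<subseteq> e"
      unfolding adjacent_on_edge_def by auto
    show ?thesis
    proof (rule main[of "closed_segment w1 w2"])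
      show "closed_segment w1 w2 \<subseteq> e" by (fact h2(2))
      show "w1 \<in> closed_segment w1 w2" "w2 \<in> closed_segment w1 w2" by simp_all
      show "w1 \<noteq> w2" by (fact h2(1))
      show "connected (closed_segment w1 w2 - {w1})" "connected (closed_segment w1 w2 - {w2})"
        using seg_minus_conn[OF h2(1)] by simp_all
      show "x \<in> closed_segment w1 w2" using h by simp
    qed
  next
    assume h: "voronoi_vertex Q Y w1 \<and> voronoi_vertex Q Y w2 \<and> w1 \<noteq> w2 \<and>
          curve_endpoint e w1 \<and> curve_endpoint e w2 \<and> x \<in> e"
    show ?thesis
    proof (rule main[of e])
      show "w1 \<in> e" "w2 \<in> e" "connected (e - {w1})" "connected (e - {w2})"
        using h unfolding curve_endpoint_def by simp_all
      show "e \<subseteq> e" by simp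
      show "w1 \<noteq> w2" "x \<in> e" using h by simp_all
    qed
  qed
qed


end
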